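(* Suppose $Q$ satisfies Condition Q and the assignment satisfies Conditions MT and Close (stated in the context). Then for $r\in\{1,2\}$ and each $d\in\mathcal D$, \[ \frac1n\sum_{i=1}^{|\mathcal D|n}Y_i(d)^rI\{D_i=d\}\xrightarrow{P}E[Y_i(d)^r]. \]
   Context: Let $\mathcal D=\{1,\dots,|\mathcal D|\}$; $J_n=|\mathcal D|n$ units with $W_i=(Y_i(1),\dots,Y_i(|\mathcal D|),X_i)$ i.i.d. with distribution $Q$ (covariates $X_i$, Euclidean norm $|\cdot|$); $D_i\in\mathcal D$ is treatment; $A^{(n)}=(A_1,\dots,A_{J_n})$. Condition Q: for every $d$: (a) $E[\mathrm{Var}[Y_i(d)\mid X_i]]>0$; (b) $E[Y_i(d)^2]<\infty$; (c) $E[Y_i(d)\mid X_i=x]$, $E[Y_i(d)^2\mid X_i=x]$, $\mathrm{Var}[Y_i(d)\mid X_i=x]$ Lipschitz in $x$. Blocks $\lambda_j=\lambda_j(X^{(n)})$, $1\le j\le n$, sets of $|\mathcal D|$ elements partitioning $\{1,\dots,J_n\}$. Condition MT: $\{Y^{(n)}(d)\}_d\perp D^{(n)}\mid X^{(n)}$ and, given $X^{(n)}$, $(D_i:i\in\lambda_j)$ are i.i.d. across $j$, uniform over permutations of $(1,\dots,|\mathcal D|)$. Condition Close: $\frac1n\sum_j\max_{i,k\in\lambda_j}|X_i-X_k|^2\xrightarrow{P}0$. *)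

theory Defs
  imports "HOL-Probability.Probability"
begin

definition conv_in_prob :: "'a measure \<Rightarrow> (nat \<Rightarrow> 'a \<Rightarrow> real) \<Rightarrow> real \<Rightarrow> bool" where
  "conv_in_prob M Z c \<longleftrightarrow>
     (\<forall>e>0. (\<lambda>n. measure M {\<omega> \<in> space M. \<bar>Z n \<omega> - c\<bar> > e}) \<longlonglongrightarrow> 0)"

definition sigma_of :: "'a measure \<Rightarrow> ('a \<Rightarrow> 'b::topological_space) \<Rightarrow> 'a measure" where
  "sigma_of M X = vimage_algebra (space M) X borel"

definition block_assignments :: "nat \<Rightarrow> nat \<Rightarrow> (nat \<Rightarrow> nat set) \<Rightarrow> (nat \<Rightarrow> nat) set" where
  "block_assignments K n B =
     {a \<in> {..<K*n} \<rightarrow>\<^sub>E {1..K}. \<forall>j<n. bij_betw a (B j) {1..K}}"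

text \<open>Measurable space of one unit W_i = ((Y_i(d))_{d in {1..K}}, X_i).\<close>
definition unit_space :: "nat \<Rightarrow> ((nat \<Rightarrow> real) \<times> 'x::euclidean_space) measure" where
  "unit_space K = PiM {1..K} (\<lambda>_. borel) \<Otimes>\<^sub>M borel"

definition unit_rv :: "nat \<Rightarrow> (nat \<Rightarrow> nat \<Rightarrow> 'a \<Rightarrow> real) \<Rightarrow> (nat \<Rightarrow> 'a \<Rightarrow> 'x)
    \<Rightarrow> nat \<Rightarrow> 'a \<Rightarrow> (nat \<Rightarrow> real) \<times> 'x" where
  "unit_rv K Y X i \<omega> = (restrict (\<lambda>d. Y i d \<omega>) {1..K}, X i \<omega>)"

end

theory Submission
  imports Defs
begin


definition trn :: "nat \<Rightarrow> nat \<Rightarrow> nat \<Rightarrow> nat" where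
  "trn d e x = (if x = d then e else if x = e then d else x)"

definition swp :: "nat set \<Rightarrow> (nat \<Rightarrow> nat) \<Rightarrow> (nat \<Rightarrow> nat) \<Rightarrow> (nat \<Rightarrow> nat)" where
  "swp B \<tau> a = (\<lambda>x. if x \<in> B then \<tau> (a x) else a x)"

lemma trn_invol[simp]: "trn d e (trn d e x) = x"
  by (auto simp: trn_def)

lemma swp_invol[simp]: "swp B (trn d e) (swp B (trn d e) a) = a"
  by (auto simp: swp_def)

lemma trn_bij: "d \<in> {1..K} \<Longrightarrow> e \<in> {1..K} \<Longrightarrow> bij_betw (trn d e) {1..K} {1..K}"
  by (rule bij_betw_byWitness[where f'="trn d e"]) (auto simp: trn_def)

lemma card_fiber:
  fixes T :: "(nat \<Rightarrow> nat) set"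
  assumes fin: "finite T" and iB: "i \<in> B" and d: "d \<in> {1..K}"
    and rng: "\<forall>a\<in>T. a i \<in> {1..K}"
    and cl: "\<forall>a\<in>T. \<forall>e\<in>{1..K}. swp B (trn d e) a \<in> T"
  shows "card T = K * card {a\<in>T. a i = d}"
proof -
  have T: "T = (\<Union>e\<in>{1..K}. {a\<in>T. a i = e})" using rng by auto
  have ce: "card {a\<in>T. a i = e} = card {a\<in>T. a i = d}" if e: "e \<in> {1..K}" for e
  proof -
    have "bij_betw (swp B (trn d e)) {a\<in>T. a i = d} {a\<in>T. a i = e}"
      by (rule bij_betw_byWitness[where f'="swp B (trn d e)"])
         (use cl e iB in \<open>auto simp: swp_def trn_def\<close>)
    then show ?thesis by (simp add: bij_betw_same_card)
  qed
  have "card T = (\<Sum>e\<in>{1..K}. card {a\<in>T. a i = e})"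
    by (subst T, rule card_UN_disjoint) (use fin in auto)
  also have "\<dots> = K * card {a\<in>T. a i = d}" using ce by simp
  finally show ?thesis .
qed

locale blk =
  fixes K n :: nat and B :: "nat \<Rightarrow> nat set"
  assumes Bsub: "\<And>j. j < n \<Longrightarrow> B j \<subseteq> {..<K*n}"
    and Bcard: "\<And>j. j < n \<Longrightarrow> card (B j) = K"
    and Bdisj: "\<And>j j'. j < n \<Longrightarrow> j' < n \<Longrightarrow> j \<noteq> j' \<Longrightarrow> B j \<inter> B j' = {}"
    and Bun: "(\<Union>j<n. B j) = {..<K*n}"
begin

abbreviation "BA \<equiv> block_assignments K n B"

lemma BA_sub: "BA \<subseteq> {..<K*n} \<rightarrow>\<^sub>E {1..K}"
  by (auto simp: block_assignments_def)

lemma BA_fin: "finite BA"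
  by (rule finite_subset[OF BA_sub]) (auto intro: finite_PiE)

lemma BA_rng: "a \<in> BA \<Longrightarrow> i < K*n \<Longrightarrow> a i \<in> {1..K}"
  using BA_sub by (metis PiE_mem lessThan_iff subsetD)

lemma Bfin: "j < n \<Longrightarrow> finite (B j)"
  using Bsub finite_subset by blast

lemma in_block: "i < K*n \<Longrightarrow> \<exists>j<n. i \<in> B j"
  using Bun by auto

lemma BA_ne: "BA \<noteq> {}"
proof -
  have "\<forall>j. \<exists>f. j < n \<longrightarrow> bij_betw f (B j) {1..K}"
  proof
    fix j show "\<exists>f. j < n \<longrightarrow> bij_betw f (B j) {1..K}"
    proof (cases "j < n")
      case True
      have cc: "card (B j) = card {1..K}" using Bcard True by simp
      obtain f where "bij_betw f (B j) {1..K}"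
        using finite_same_card_bij[OF Bfin[OF True] _ cc] by auto
      then show ?thesis by blast
    qed auto
  qed
  then obtain f where f: "\<And>j. j < n \<Longrightarrow> bij_betw (f j) (B j) {1..K}" by metis
  define a where "a = restrict (\<lambda>x. f (SOME j. j < n \<and> x \<in> B j) x) {..<K*n}"
  have S: "(SOME j. j < n \<and> x \<in> B j) = j" if "j < n" "x \<in> B j" for x j
    using that Bdisj by (intro some_equality) auto
  have "a \<in> BA"
    unfolding block_assignments_def
  proof (intro CollectI conjI allI impI)
    show "a \<in> {..<K*n} \<rightarrow>\<^sub>E {1..K}"
    proof
      fix x assume "x \<in> {..<K*n}"
      then obtain j where j: "j < n" "x \<in> B j" using in_block by auto
      then show "a x \<in> {1..K}" using S[OF j] f[OF j(1)] Bsub[OF j(1)]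
        by (auto simp: a_def bij_betw_def)
    qed (simp add: a_def)
    fix j assume j: "j < n"
    show "bij_betw a (B j) {1..K}"
      by (rule bij_betw_cong[THEN iffD1, OF _ f[OF j]])
         (use S j Bsub[OF j] in \<open>auto simp: a_def\<close>)
  qed
  then show ?thesis by auto
qed

lemma BA_closed:
  assumes a: "a \<in> BA" and j: "j < n" and d: "d \<in> {1..K}" and e: "e \<in> {1..K}"
  shows "swp (B j) (trn d e) a \<in> BA"
  unfolding block_assignments_def
proof (intro CollectI conjI allI impI)
  show "swp (B j) (trn d e) a \<in> {..<K*n} \<rightarrow>\<^sub>E {1..K}"
    using a BA_sub Bsub[OF j] d e by (auto simp: swp_def trn_def PiE_def Pi_def extensional_def)
  fix j' assume j': "j' < n"
  have ab: "bij_betw a (B j') {1..K}" using a j' by (auto simp: block_assignments_def)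
  show "bij_betw (swp (B j) (trn d e) a) (B j') {1..K}"
  proof (cases "j' = j")
    case True
    have "bij_betw (trn d e \<circ> a) (B j') {1..K}"
      by (rule bij_betw_trans[OF ab trn_bij[OF d e]])
    then show ?thesis
      by (rule bij_betw_cong[THEN iffD1, rotated]) (use True in \<open>auto simp: swp_def\<close>)
  next
    case False
    then have "B j \<inter> B j' = {}" using Bdisj j j' by auto
    then show ?thesis
      by (rule_tac bij_betw_cong[THEN iffD1, OF _ ab]) (auto simp: swp_def)
  qed
qed

lemma card1:
  assumes j: "j < n" and i: "i \<in> B j" and d: "d \<in> {1..K}"
  shows "card BA = K * card {a\<in>BA. a i = d}"
proof -
  have "i < K*n" using Bsub[OF j] i by auto
  then show ?thesis
    by (intro card_fiber[OF BA_fin i d]) (use BA_rng BA_closed[OF _ j d] in blast)+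
qed

lemma card2:
  assumes j: "j < n" and i: "i \<in> B j" and j': "j' < n" and k: "k \<in> B j'" and jj: "j \<noteq> j'"
    and d: "d \<in> {1..K}"
  shows "card BA = K * K * card {a\<in>BA. a i = d \<and> a k = d}"
proof -
  have kj: "k \<notin> B j" using Bdisj[OF j j' jj] k by auto
  have ik: "i < K*n" using Bsub[OF j] i by auto
  have "card {a\<in>BA. a k = d} = K * card {a\<in>{a\<in>BA. a k = d}. a i = d}"
  proof (rule card_fiber[OF _ i d])
    show "finite {a \<in> BA. a k = d}" using BA_fin by simp
    show "\<forall>a\<in>{a \<in> BA. a k = d}. a i \<in> {1..K}" using BA_rng[OF _ ik] by auto
    show "\<forall>a\<in>{a \<in> BA. a k = d}. \<forall>e\<in>{1..K}. swp (B j) (trn d e) a \<in> {a \<in> BA. a k = d}"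
      using BA_closed[OF _ j d] kj by (auto simp: swp_def)
  qed
  moreover have "{a\<in>{a\<in>BA. a k = d}. a i = d} = {a\<in>BA. a i = d \<and> a k = d}" by auto
  ultimately show ?thesis using card1[OF j' k d] by simp
qed


lemma sum_split: "(\<Sum>i<K*n. F i) = (\<Sum>j<n. \<Sum>i\<in>B j. (F i :: real))"
proof -
  have "(\<Sum>i<K*n. F i) = sum F (\<Union>j<n. B j)" by (simp add: Bun)
  also have "\<dots> = (\<Sum>j<n. \<Sum>i\<in>B j. F i)"
    by (rule sum.UNION_disjoint) (use Bfin Bdisj in auto)
  finally show ?thesis .
qed

lemma cross_zero:
  assumes K1: "K \<ge> 1" and j: "j < n" and i: "i \<in> B j" and j': "j' < n" and k: "k \<in> B j'" and jj: "j \<noteq> j'"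
    and d: "d \<in> {1..K}"
  shows "(\<Sum>a\<in>BA. (of_bool (a i = d) - 1/real K) * (of_bool (a k = d) - 1/real K)) = 0"
proof -
  let ?m = "real (card BA)"
  have c1: "real (card {a\<in>BA. a i = d}) = ?m / K" using card1[OF j i d] K1 by simp
  have c2: "real (card {a\<in>BA. a k = d}) = ?m / K" using card1[OF j' k d] K1 by simp
  have c3: "real (card {a\<in>BA. a i = d \<and> a k = d}) = ?m / (K*K)" using card2[OF j i j' k jj d] K1 by simp
  have e: "(of_bool (a i = d) - 1/real K) * (of_bool (a k = d) - 1/real K)
        = of_bool (a i = d \<and> a k = d) - of_bool (a i = d) / K - of_bool (a k = d) / K + 1/(K*K)" for a :: "nat \<Rightarrow> nat"
    using K1 by (auto simp: field_simps)
  have "(\<Sum>a\<in>BA. (of_bool (a i = d) - 1/real K) * (of_bool (a k = d) - 1/real K))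
      = (\<Sum>a\<in>BA. of_bool (a i = d \<and> a k = d)) - (\<Sum>a\<in>BA. of_bool (a i = d)) / K
        - (\<Sum>a\<in>BA. of_bool (a k = d)) / K + ?m / (K*K)"
    by (simp only: e sum.distrib sum_subtractf sum_divide_distrib[symmetric]) simp
  also have "\<dots> = ?m / (K*K) - (?m / K) / K - (?m / K) / K + ?m / (K*K)"
    using BA_fin c1 c2 c3 by (simp add: Int_def conj_commute)
  also have "\<dots> = 0" by simp
  finally show ?thesis .
qed

lemma avg_bound:
  fixes \<psi> :: "nat \<Rightarrow> real"
  assumes K1: "K \<ge> 1" and d: "d \<in> {1..K}" and psi: "\<And>i. \<bar>\<psi> i\<bar> \<le> c"
  shows "(\<Sum>a\<in>BA. (\<Sum>i<K*n. \<psi> i * (of_bool (a i = d) - 1/real K))^2)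
         \<le> real (card BA) * (real n * (real K * c)^2)"
proof -
  define E where "E a i = (of_bool (a i = d) - 1/real K :: real)" for a :: "nat \<Rightarrow> nat" and i
  define V where "V a j = (\<Sum>i\<in>B j. \<psi> i * E a i)" for a j
  have Eb: "\<bar>E a i\<bar> \<le> 1" for a i using K1 by (auto simp: E_def)
  have c0: "c \<ge> 0" using psi[of 0] by simp
  have sq: "(\<Sum>i<K*n. \<psi> i * E a i)^2 = (\<Sum>j<n. \<Sum>j'<n. V a j * V a j')" for a
    by (simp add: sum_split V_def power2_eq_square sum_product)
  have off: "(\<Sum>a\<in>BA. V a j * V a j') = 0" if "j < n" "j' < n" "j \<noteq> j'" for j j'
  proof -
    have pa: "V a j * V a j' = (\<Sum>i\<in>B j. \<Sum>k\<in>B j'. \<psi> i * \<psi> k * (E a i * E a k))" for a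
      unfolding V_def sum_product by (simp add: mult.assoc mult.left_commute)
    have "(\<Sum>a\<in>BA. V a j * V a j') = (\<Sum>a\<in>BA. \<Sum>i\<in>B j. \<Sum>k\<in>B j'. \<psi> i * \<psi> k * (E a i * E a k))"
      by (simp only: pa)
    also have "\<dots> = (\<Sum>i\<in>B j. \<Sum>a\<in>BA. \<Sum>k\<in>B j'. \<psi> i * \<psi> k * (E a i * E a k))"
      by (rule sum.swap)
    also have "\<dots> = (\<Sum>i\<in>B j. \<Sum>k\<in>B j'. \<Sum>a\<in>BA. \<psi> i * \<psi> k * (E a i * E a k))"
      by (rule sum.cong[OF refl], rule sum.swap)
    also have "\<dots> = (\<Sum>i\<in>B j. \<Sum>k\<in>B j'. \<psi> i * \<psi> k * (\<Sum>a\<in>BA. E a i * E a k))"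
      by (simp add: sum_distrib_left)
    also have "\<dots> = 0" using cross_zero[OF K1 that(1) _ that(2) _ that(3) d] by (simp add: E_def)
    finally show ?thesis .
  qed
  have Vb: "\<bar>V a j\<bar> \<le> real K * c" if "j < n" for a j
  proof -
    have "\<bar>V a j\<bar> \<le> (\<Sum>i\<in>B j. \<bar>\<psi> i * E a i\<bar>)" unfolding V_def by (rule sum_abs)
    also have "\<dots> \<le> (\<Sum>i\<in>B j. c)"
    proof (rule sum_mono)
      fix i show "\<bar>\<psi> i * E a i\<bar> \<le> c"
        using mult_mono[OF psi[of i] Eb[of a i]] c0 by (simp add: abs_mult)
    qed
    also have "\<dots> = real K * c" using Bcard[OF that] by simp
    finally show ?thesis .
  qed
  have diag: "(\<Sum>a\<in>BA. V a j * V a j) \<le> real (card BA) * (real K * c)^2" if "j < n" for j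
  proof -
    have "(\<Sum>a\<in>BA. V a j * V a j) \<le> (\<Sum>a\<in>BA. (real K * c)^2)"
    proof (rule sum_mono)
      fix a
      have "\<bar>V a j\<bar>^2 \<le> (real K * c)^2" by (rule power_mono[OF Vb[OF that]]) simp
      then show "V a j * V a j \<le> (real K * c)^2" by (simp add: power2_eq_square)
    qed
    then show ?thesis by simp
  qed
  have "(\<Sum>a\<in>BA. (\<Sum>i<K*n. \<psi> i * E a i)^2) = (\<Sum>j<n. \<Sum>j'<n. \<Sum>a\<in>BA. V a j * V a j')"
    unfolding sq by (subst sum.swap, rule sum.cong, simp, subst sum.swap, simp)
  also have "\<dots> = (\<Sum>j<n. \<Sum>a\<in>BA. V a j * V a j)"
  proof (rule sum.cong[OF refl])
    fix j assume j: "j \<in> {..<n}"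
    have "(\<Sum>j'<n. \<Sum>a\<in>BA. V a j * V a j') = (\<Sum>j'<n. if j' = j then (\<Sum>a\<in>BA. V a j * V a j) else 0)"
      by (rule sum.cong) (use off j in auto)
    also have "\<dots> = (\<Sum>a\<in>BA. V a j * V a j)" using j by (simp add: sum.delta')
    finally show "(\<Sum>j'<n. \<Sum>a\<in>BA. V a j * V a j') = (\<Sum>a\<in>BA. V a j * V a j)" .
  qed
  also have "\<dots> \<le> (\<Sum>j<n. real (card BA) * (real K * c)^2)"
    by (rule sum_mono) (use diag in auto)
  also have "\<dots> = real (card BA) * (real n * (real K * c)^2)" by simp
  finally show ?thesis unfolding E_def .
qed

end



locale lc1 = prob_space M for M :: "'a measure" +
  fixes K :: nat and Y :: "nat \<Rightarrow> nat \<Rightarrow> 'a \<Rightarrow> real" and X :: "nat \<Rightarrow> 'a \<Rightarrow> 'x::euclidean_space"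
    and D :: "nat \<Rightarrow> nat \<Rightarrow> 'a \<Rightarrow> nat" and lam :: "nat \<Rightarrow> nat \<Rightarrow> (nat \<Rightarrow> 'x) \<Rightarrow> nat set"
  assumes K1: "K \<ge> 1"
    and indep: "indep_vars (\<lambda>_. unit_space K) (unit_rv K Y X) UNIV"
    and ident: "\<forall>i. distr M (unit_space K) (unit_rv K Y X i) = distr M (unit_space K) (unit_rv K Y X 0)"
    and blocks: "\<forall>n xs. (\<forall>j<n. lam n j xs \<subseteq> {..<K*n} \<and> card (lam n j xs) = K) \<and>
                  (\<forall>j<n. \<forall>j'<n. j \<noteq> j' \<longrightarrow> lam n j xs \<inter> lam n j' xs = {}) \<and>
                  (\<Union>j<n. lam n j xs) = {..<K*n}"
    and blocks_meas: "\<forall>n j. (\<lambda>\<omega>. lam n j (\<lambda>i. X i \<omega>)) \<in> M \<rightarrow>\<^sub>M count_space UNIV"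
    and D_meas: "\<forall>n i. D n i \<in> M \<rightarrow>\<^sub>M count_space UNIV"
    and MT: "\<forall>n. \<forall>B\<in>sets (PiM {..<K*n} (\<lambda>_. unit_space K)). \<forall>a.
               measure M {\<omega>\<in>space M. restrict (\<lambda>i. unit_rv K Y X i \<omega>) {..<K*n} \<in> B \<and>
                                      restrict (\<lambda>i. D n i \<omega>) {..<K*n} = a}
             = (\<integral>\<omega>. indicator B (restrict (\<lambda>i. unit_rv K Y X i \<omega>) {..<K*n}) *
                     pmf (pmf_of_set (block_assignments K n (\<lambda>j. lam n j (\<lambda>i. X i \<omega>)))) a \<partial>M)"
begin

definition "WW n \<omega> = restrict (\<lambda>i. unit_rv K Y X i \<omega>) {..<K*n}"
definition "DD n \<omega> = restrict (\<lambda>i. D n i \<omega>) {..<K*n}"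
definition "BAo n \<omega> = block_assignments K n (\<lambda>j. lam n j (\<lambda>i. X i \<omega>))"
definition "pa n a \<omega> = pmf (pmf_of_set (BAo n \<omega>)) a"
definition "PS n = PiM {..<K*n} (\<lambda>_. unit_space K)"
definition "Sa n a = {\<omega>\<in>space M. DD n \<omega> = a}"

lemma W_meas: "unit_rv K Y X i \<in> M \<rightarrow>\<^sub>M unit_space K"
  using indep unfolding indep_vars_def by auto

lemma WW_meas: "WW n \<in> M \<rightarrow>\<^sub>M PS n"
  unfolding WW_def PS_def by (rule measurable_restrict) (rule W_meas)

lemma blkI: "blk K n (\<lambda>j. lam n j xs)"
  using blocks unfolding blk_def by blast

lemma BAo_restrict: "BAo n \<omega> = block_assignments K n (restrict (\<lambda>j. lam n j (\<lambda>i. X i \<omega>)) {..<n})"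
  unfolding BAo_def block_assignments_def by auto

lemma L_meas: "(\<lambda>\<omega>. restrict (\<lambda>j. lam n j (\<lambda>i. X i \<omega>)) {..<n})
    \<in> M \<rightarrow>\<^sub>M count_space (PiE {..<n} (\<lambda>_. Pow {..<K*n}))"
proof (rule measurable_count_space_eq2[THEN iffD2], (intro finite_PiE; simp), intro conjI ballI)
  show "(\<lambda>\<omega>. restrict (\<lambda>j. lam n j (\<lambda>i. X i \<omega>)) {..<n}) \<in> space M \<rightarrow> PiE {..<n} (\<lambda>_. Pow {..<K*n})"
    using blocks by auto
  fix c assume c: "c \<in> PiE {..<n} (\<lambda>_. Pow {..<K*n})"
  have "(\<lambda>\<omega>. restrict (\<lambda>j. lam n j (\<lambda>i. X i \<omega>)) {..<n}) -` {c} \<inter> space M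
      = {\<omega>\<in>space M. \<forall>j\<in>{..<n}. lam n j (\<lambda>i. X i \<omega>) = c j}"
    using c by (auto simp: PiE_def extensional_def fun_eq_iff)
  also have "\<dots> \<in> sets M"
  proof (rule sets.sets_Collect_finite_All)
    fix j
    have "(\<lambda>\<omega>. lam n j (\<lambda>i. X i \<omega>)) -` {c j} \<inter> space M \<in> sets M"
      using blocks_meas by (intro measurable_sets) auto
    moreover have "(\<lambda>\<omega>. lam n j (\<lambda>i. X i \<omega>)) -` {c j} \<inter> space M = {\<omega>\<in>space M. lam n j (\<lambda>i. X i \<omega>) = c j}"
      by auto
    ultimately show "{\<omega>\<in>space M. lam n j (\<lambda>i. X i \<omega>) = c j} \<in> sets M" by simp
  qed simp
  finally show "(\<lambda>\<omega>. restrict (\<lambda>j. lam n j (\<lambda>i. X i \<omega>)) {..<n}) -` {c} \<inter> space M \<in> sets M" .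
qed

lemma blocks_fun_meas: "(\<lambda>\<omega>. G (BAo n \<omega>) :: real) \<in> borel_measurable M"
proof -
  have "(\<lambda>c. G (block_assignments K n c)) \<circ> (\<lambda>\<omega>. restrict (\<lambda>j. lam n j (\<lambda>i. X i \<omega>)) {..<n}) \<in> borel_measurable M"
    by (rule measurable_comp[OF L_meas]) simp
  then show ?thesis by (simp add: comp_def BAo_restrict[symmetric])
qed

lemma pa_meas: "pa n a \<in> borel_measurable M"
  unfolding pa_def by (rule blocks_fun_meas)

lemma BA_fin': "finite (BAo n \<omega>)" and BA_ne': "BAo n \<omega> \<noteq> {}"
  using blk.BA_fin[OF blkI] blk.BA_ne[OF blkI] unfolding BAo_def by auto

lemma pa_eq: "pa n a \<omega> = indicator (BAo n \<omega>) a / card (BAo n \<omega>)"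
  unfolding pa_def using BA_fin' BA_ne' by simp

lemma pa_nonneg: "pa n a \<omega> \<ge> 0" and pa_le1: "pa n a \<omega> \<le> 1"
  unfolding pa_def by (simp_all add: pmf_le_1)

lemma Sa_sets: "Sa n a \<in> sets M"
proof (cases "a \<in> extensional {..<K*n}")
  case True
  have "Sa n a = {\<omega>\<in>space M. \<forall>i\<in>{..<K*n}. D n i \<omega> = a i}"
    using True by (auto simp: Sa_def DD_def extensional_def fun_eq_iff)
  also have "\<dots> \<in> sets M"
  proof (rule sets.sets_Collect_finite_All)
    fix i
    have "D n i -` {a i} \<inter> space M \<in> sets M" using D_meas by (intro measurable_sets) auto
    moreover have "D n i -` {a i} \<inter> space M = {\<omega>\<in>space M. D n i \<omega> = a i}" by auto
    ultimately show "{\<omega>\<in>space M. D n i \<omega> = a i} \<in> sets M" by simp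
  qed simp
  finally show ?thesis .
next
  case False
  then have "Sa n a = {}" by (auto simp: Sa_def DD_def)
  then show ?thesis by simp
qed

lemma MT': "Bs \<in> sets (PS n) \<Longrightarrow> measure M {\<omega>\<in>space M. WW n \<omega> \<in> Bs \<and> DD n \<omega> = a}
   = (\<integral>\<omega>. indicator Bs (WW n \<omega>) * pa n a \<omega> \<partial>M)"
  using MT unfolding WW_def DD_def pa_def BAo_def PS_def by blast

end


context lc1 begin

lemma F6:
  assumes h: "h \<in> borel_measurable (PS n)"
  shows "(\<integral>\<omega>. indicator (Sa n a) \<omega> * h (WW n \<omega>) \<partial>M) = (\<integral>\<omega>. pa n a \<omega> * h (WW n \<omega>) \<partial>M)"
proof -
  define g1 where "g1 \<omega> = (indicator (Sa n a) \<omega> :: real)" for \<omega>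
  have g1m: "g1 \<in> borel_measurable M" unfolding g1_def using Sa_sets by simp
  have pam: "pa n a \<in> borel_measurable M" by (rule pa_meas)
  have dist_eq: "distr (density M (\<lambda>\<omega>. ennreal (g1 \<omega>))) (PS n) (WW n)
      = distr (density M (\<lambda>\<omega>. ennreal (pa n a \<omega>))) (PS n) (WW n)"
  proof (rule measure_eqI)
    show "sets (distr (density M (\<lambda>\<omega>. ennreal (g1 \<omega>))) (PS n) (WW n))
        = sets (distr (density M (\<lambda>\<omega>. ennreal (pa n a \<omega>))) (PS n) (WW n))" by simp
    fix Bs assume "Bs \<in> sets (distr (density M (\<lambda>\<omega>. ennreal (g1 \<omega>))) (PS n) (WW n))"
    then have Bs: "Bs \<in> sets (PS n)" by simp
    have pre: "WW n -` Bs \<inter> space M \<in> sets M" by (rule measurable_sets[OF WW_meas Bs])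
    have S2: "{\<omega>\<in>space M. WW n \<omega> \<in> Bs \<and> DD n \<omega> = a} = Sa n a \<inter> (WW n -` Bs \<inter> space M)"
      by (auto simp: Sa_def)
    have S2s: "{\<omega>\<in>space M. WW n \<omega> \<in> Bs \<and> DD n \<omega> = a} \<in> sets M"
      unfolding S2 using Sa_sets pre by auto
    have intg: "integrable M (\<lambda>\<omega>. indicator Bs (WW n \<omega>) * pa n a \<omega>)"
    proof (rule integrable_const_bound[where B=1])
      show "AE x in M. norm (indicator Bs (WW n x) * pa n a x) \<le> (1::real)"
        using pa_nonneg pa_le1 by (auto simp: indicator_def)
      show "(\<lambda>\<omega>. indicator Bs (WW n \<omega>) * pa n a \<omega>) \<in> borel_measurable M"
        using WW_meas Bs pam by measurable
    qed
    have "emeasure (distr (density M (\<lambda>\<omega>. ennreal (g1 \<omega>))) (PS n) (WW n)) Bs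
        = emeasure (density M (\<lambda>\<omega>. ennreal (g1 \<omega>))) (WW n -` Bs \<inter> space M)"
      by (subst emeasure_distr) (use WW_meas Bs in simp_all)
    also have "\<dots> = (\<integral>\<^sup>+\<omega>. ennreal (g1 \<omega>) * indicator (WW n -` Bs \<inter> space M) \<omega> \<partial>M)"
      by (rule emeasure_density) (use g1m pre in simp_all)
    also have "\<dots> = (\<integral>\<^sup>+\<omega>. indicator {\<omega>\<in>space M. WW n \<omega> \<in> Bs \<and> DD n \<omega> = a} \<omega> \<partial>M)"
      by (rule nn_integral_cong) (auto simp: g1_def Sa_def indicator_def)
    also have "\<dots> = emeasure M {\<omega>\<in>space M. WW n \<omega> \<in> Bs \<and> DD n \<omega> = a}"
      using S2s by simp
    also have "\<dots> = ennreal (measure M {\<omega>\<in>space M. WW n \<omega> \<in> Bs \<and> DD n \<omega> = a})"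
      by (simp add: emeasure_eq_measure)
    also have "\<dots> = ennreal (\<integral>\<omega>. indicator Bs (WW n \<omega>) * pa n a \<omega> \<partial>M)"
      by (simp add: MT' Bs)
    also have "\<dots> = (\<integral>\<^sup>+\<omega>. ennreal (indicator Bs (WW n \<omega>) * pa n a \<omega>) \<partial>M)"
      by (rule nn_integral_eq_integral[symmetric, OF intg]) (use pa_nonneg in simp)
    also have "\<dots> = (\<integral>\<^sup>+\<omega>. ennreal (pa n a \<omega>) * indicator (WW n -` Bs \<inter> space M) \<omega> \<partial>M)"
      by (rule nn_integral_cong) (auto simp: indicator_def)
    also have "\<dots> = emeasure (density M (\<lambda>\<omega>. ennreal (pa n a \<omega>))) (WW n -` Bs \<inter> space M)"
      by (rule emeasure_density[symmetric]) (use pam pre in simp_all)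
    also have "\<dots> = emeasure (distr (density M (\<lambda>\<omega>. ennreal (pa n a \<omega>))) (PS n) (WW n)) Bs"
      by (subst emeasure_distr) (use WW_meas Bs in simp_all)
    finally show "emeasure (distr (density M (\<lambda>\<omega>. ennreal (g1 \<omega>))) (PS n) (WW n)) Bs
        = emeasure (distr (density M (\<lambda>\<omega>. ennreal (pa n a \<omega>))) (PS n) (WW n)) Bs" .
  qed
  have hW: "(\<lambda>\<omega>. h (WW n \<omega>)) \<in> borel_measurable M" using WW_meas h by measurable
  have "(\<integral>\<omega>. indicator (Sa n a) \<omega> * h (WW n \<omega>) \<partial>M) = integral\<^sup>L (density M (\<lambda>\<omega>. ennreal (g1 \<omega>))) (\<lambda>\<omega>. h (WW n \<omega>))"
    by (subst integral_density) (use g1m hW in \<open>auto simp: g1_def\<close>)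
  also have "\<dots> = integral\<^sup>L (distr (density M (\<lambda>\<omega>. ennreal (g1 \<omega>))) (PS n) (WW n)) h"
    by (rule integral_distr[symmetric]) (use WW_meas h in simp_all)
  also have "\<dots> = integral\<^sup>L (distr (density M (\<lambda>\<omega>. ennreal (pa n a \<omega>))) (PS n) (WW n)) h"
    by (simp only: dist_eq)
  also have "\<dots> = integral\<^sup>L (density M (\<lambda>\<omega>. ennreal (pa n a \<omega>))) (\<lambda>\<omega>. h (WW n \<omega>))"
    by (rule integral_distr) (use WW_meas h in simp_all)
  also have "\<dots> = (\<integral>\<omega>. pa n a \<omega> * h (WW n \<omega>) \<partial>M)"
    by (subst integral_density) (use pam hW pa_nonneg in auto)
  finally show ?thesis .
qed


definition "Fin n = ({..<K*n} \<rightarrow>\<^sub>E {1..K})"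

lemma Fin_fin: "finite (Fin n)" unfolding Fin_def by (intro finite_PiE) auto

lemma sum_pa: "(\<Sum>a\<in>Fin n. pa n a \<omega>) = 1"
proof -
  have sub: "BAo n \<omega> \<subseteq> Fin n" using blk.BA_sub[OF blkI] unfolding BAo_def Fin_def by blast
  have "(\<Sum>a\<in>Fin n. pa n a \<omega>) = (\<Sum>a\<in>Fin n. indicator (BAo n \<omega>) a) / card (BAo n \<omega>)"
    by (simp add: pa_eq sum_divide_distrib)
  also have "(\<Sum>a\<in>Fin n. indicator (BAo n \<omega>) a) = real (card (Fin n \<inter> BAo n \<omega>))"
    by (simp add: indicator_def Fin_fin)
  also have "Fin n \<inter> BAo n \<omega> = BAo n \<omega>" using sub by blast
  also have "real (card (BAo n \<omega>)) / real (card (BAo n \<omega>)) = 1" using BA_fin' BA_ne' by simp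
  finally show ?thesis .
qed

lemma pa_integrable: "integrable M (\<lambda>\<omega>. pa n a \<omega> * c)"
  by (rule integrable_const_bound[where B="\<bar>c\<bar>"])
     (use pa_nonneg pa_le1 pa_meas in \<open>auto simp: abs_mult intro!: mult_left_le_one_le\<close>)

lemma measure_Sa: "measure M (Sa n a) = (\<integral>\<omega>. pa n a \<omega> \<partial>M)"
proof -
  have "measure M (Sa n a) = (\<integral>\<omega>. indicator (Sa n a) \<omega> * (\<lambda>_. 1::real) (WW n \<omega>) \<partial>M)"
    using Sa_sets by simp
  also have "\<dots> = (\<integral>\<omega>. pa n a \<omega> * (\<lambda>_. 1::real) (WW n \<omega>) \<partial>M)"
    by (rule F6) simp
  finally show ?thesis by simp
qed

lemma AE_Fin: "AE \<omega> in M. DD n \<omega> \<in> Fin n"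
proof -
  have U: "(\<Union>a\<in>Fin n. Sa n a) = {\<omega>\<in>space M. DD n \<omega> \<in> Fin n}" by (auto simp: Sa_def)
  have "measure M (\<Union>a\<in>Fin n. Sa n a) = (\<Sum>a\<in>Fin n. measure M (Sa n a))"
    by (rule measure_finite_Union) (use Fin_fin Sa_sets in \<open>auto simp: disjoint_family_on_def Sa_def\<close>)
  also have "\<dots> = (\<Sum>a\<in>Fin n. \<integral>\<omega>. pa n a \<omega> \<partial>M)" by (simp add: measure_Sa)
  also have "\<dots> = (\<integral>\<omega>. (\<Sum>a\<in>Fin n. pa n a \<omega>) \<partial>M)"
    using pa_integrable[where c=1] by simp
  also have "\<dots> = 1" by (simp add: sum_pa prob_space)
  finally have "prob {\<omega>\<in>space M. DD n \<omega> \<in> Fin n} = 1" by (simp add: U)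
  from AE_prob_1[OF this] show ?thesis by simp
qed

lemma DD_meas: "DD n \<in> M \<rightarrow>\<^sub>M count_space ({..<K*n} \<rightarrow>\<^sub>E (UNIV::nat set))"
proof (rule measurable_count_space_eq_countable[THEN iffD2])
  show "countable ({..<K*n} \<rightarrow>\<^sub>E (UNIV::nat set))" by (rule countable_PiE) auto
  show "DD n \<in> space M \<rightarrow> {..<K * n} \<rightarrow>\<^sub>E UNIV \<and>
    (\<forall>a\<in>{..<K * n} \<rightarrow>\<^sub>E UNIV. DD n -` {a} \<inter> space M \<in> sets M)"
  proof (intro conjI ballI)
    fix a
    have "DD n -` {a} \<inter> space M = Sa n a" by (auto simp: Sa_def)
    then show "DD n -` {a} \<inter> space M \<in> sets M" using Sa_sets by simp
  qed (auto simp: DD_def)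
qed

lemma F8:
  assumes Hm: "\<And>a. H a \<in> borel_measurable (PS n)" and Hb: "\<And>a w. \<bar>H a w\<bar> \<le> C"
  shows "(\<integral>\<omega>. H (DD n \<omega>) (WW n \<omega>) \<partial>M) = (\<integral>\<omega>. (\<Sum>a\<in>Fin n. pa n a \<omega> * H a (WW n \<omega>)) \<partial>M)"
proof -
  have C0: "0 \<le> C" using Hb[of undefined undefined] by (rule order_trans[OF abs_ge_zero])
  have HW: "(\<lambda>\<omega>. H a (WW n \<omega>)) \<in> borel_measurable M" for a
    using WW_meas Hm[of a] by measurable
  have m1: "(\<lambda>\<omega>. H (DD n \<omega>) (WW n \<omega>)) \<in> borel_measurable M"
    by (rule measurable_compose_countable'[OF HW DD_meas]) (rule countable_PiE; auto)
  have int1: "integrable M (\<lambda>\<omega>. indicator (Sa n a) \<omega> * H a (WW n \<omega>))" for a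
    by (rule integrable_const_bound[where B=C]) (use Hb HW Sa_sets C0 in \<open>auto simp: indicator_def\<close>)
  have pb: "\<bar>pa n a \<omega> * H a w\<bar> \<le> C" for a \<omega> w
    using mult_mono[OF pa_le1 Hb] pa_nonneg C0 by (simp add: abs_mult)
  have int2: "integrable M (\<lambda>\<omega>. pa n a \<omega> * H a (WW n \<omega>))" for a
    by (rule integrable_const_bound[where B=C])
       (use HW pa_meas pb in auto)
  have "(\<integral>\<omega>. H (DD n \<omega>) (WW n \<omega>) \<partial>M) = (\<integral>\<omega>. (\<Sum>a\<in>Fin n. indicator (Sa n a) \<omega> * H a (WW n \<omega>)) \<partial>M)"
  proof (rule integral_cong_AE[OF m1])
    show "(\<lambda>\<omega>. \<Sum>a\<in>Fin n. indicator (Sa n a) \<omega> * H a (WW n \<omega>)) \<in> borel_measurable M"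
      using int1 by auto
    show "AE \<omega> in M. H (DD n \<omega>) (WW n \<omega>) = (\<Sum>a\<in>Fin n. indicator (Sa n a) \<omega> * H a (WW n \<omega>))"
      using AE_Fin[of n] AE_space
    proof eventually_elim
      case (elim \<omega>)
      have "(\<Sum>a\<in>Fin n. indicator (Sa n a) \<omega> * H a (WW n \<omega>))
          = (\<Sum>a\<in>Fin n. if a = DD n \<omega> then H a (WW n \<omega>) else 0)"
        by (rule sum.cong) (use elim in \<open>auto simp: Sa_def indicator_def\<close>)
      also have "\<dots> = H (DD n \<omega>) (WW n \<omega>)" using elim Fin_fin by simp
      finally show ?case by simp
    qed
  qed
  also have "\<dots> = (\<Sum>a\<in>Fin n. \<integral>\<omega>. indicator (Sa n a) \<omega> * H a (WW n \<omega>) \<partial>M)"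
    using int1 by simp
  also have "\<dots> = (\<Sum>a\<in>Fin n. \<integral>\<omega>. pa n a \<omega> * H a (WW n \<omega>) \<partial>M)"
    by (rule sum.cong[OF refl], rule F6[OF Hm])
  also have "\<dots> = (\<integral>\<omega>. (\<Sum>a\<in>Fin n. pa n a \<omega> * H a (WW n \<omega>)) \<partial>M)"
    using int2 by simp
  finally show ?thesis .
qed


lemma EA:
  assumes psim: "\<psi> \<in> borel_measurable (unit_space K)" and psib: "\<And>w. \<bar>\<psi> w\<bar> \<le> c"
    and d: "d \<in> {1..K}"
  shows "(\<integral>\<omega>. (\<Sum>i<K*n. \<psi> (unit_rv K Y X i \<omega>) * (of_bool (D n i \<omega> = d) - 1/real K))^2 \<partial>M)
         \<le> real n * (real K * c)^2"
proof -
  define H where "H a w = (\<Sum>i<K*n. \<psi> (w i) * (of_bool (a i = d) - 1/real K))^2"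
    for a :: "nat \<Rightarrow> nat" and w :: "nat \<Rightarrow> (nat \<Rightarrow> real) \<times> 'x"
  have c0: "c \<ge> 0" using psib[of undefined] by (rule order_trans[OF abs_ge_zero])
  have Hm: "H a \<in> borel_measurable (PS n)" for a
  proof -
    have "(\<lambda>w. \<psi> (w i)) \<in> borel_measurable (PS n)" if "i \<in> {..<K*n}" for i
      unfolding PS_def using psim that by measurable
    then show ?thesis unfolding H_def by measurable
  qed
  have Hb: "\<bar>H a w\<bar> \<le> (real (K*n) * c)^2" for a w
  proof -
    have "\<bar>\<Sum>i<K*n. \<psi> (w i) * (of_bool (a i = d) - 1/real K)\<bar> \<le> (\<Sum>i<K*n. c)"
    proof (rule order_trans[OF sum_abs], rule sum_mono)
      fix i
      have e1: "\<bar>of_bool (a i = d) - 1/real K\<bar> \<le> (1::real)" using K1 by auto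
      show "\<bar>\<psi> (w i) * (of_bool (a i = d) - 1/real K)\<bar> \<le> c"
        using mult_mono[OF psib[of "w i"] e1] c0 by (simp add: abs_mult)
    qed
    then have "\<bar>\<Sum>i<K*n. \<psi> (w i) * (of_bool (a i = d) - 1/real K)\<bar>^2 \<le> (real (K*n) * c)^2"
      by (intro power_mono) auto
    then show ?thesis by (simp add: H_def)
  qed
  have "(\<integral>\<omega>. (\<Sum>i<K*n. \<psi> (unit_rv K Y X i \<omega>) * (of_bool (D n i \<omega> = d) - 1/real K))^2 \<partial>M)
      = (\<integral>\<omega>. H (DD n \<omega>) (WW n \<omega>) \<partial>M)"
    by (simp add: H_def DD_def WW_def)
  also have "\<dots> = (\<integral>\<omega>. (\<Sum>a\<in>Fin n. pa n a \<omega> * H a (WW n \<omega>)) \<partial>M)"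
    by (rule F8[OF Hm Hb])
  also have "\<dots> \<le> (\<integral>\<omega>. real n * (real K * c)^2 \<partial>M)"
  proof (rule integral_mono)
    have "integrable M (\<lambda>\<omega>. pa n a \<omega> * H a (WW n \<omega>))" for a
    proof (rule integrable_const_bound[where B="(real (K*n) * c)^2"])
      show "AE x in M. norm (pa n a x * H a (WW n x)) \<le> (real (K*n) * c)^2"
        using mult_mono[OF pa_le1 Hb] pa_nonneg by (simp add: abs_mult)
      show "(\<lambda>\<omega>. pa n a \<omega> * H a (WW n \<omega>)) \<in> borel_measurable M"
        using pa_meas WW_meas Hm[of a] by measurable
    qed
    then show "integrable M (\<lambda>\<omega>. \<Sum>a\<in>Fin n. pa n a \<omega> * H a (WW n \<omega>))" by auto
    show "integrable M (\<lambda>\<omega>. real n * (real K * c)^2)" by simp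
    fix \<omega> assume "\<omega> \<in> space M"
    have sub: "BAo n \<omega> \<subseteq> Fin n" using blk.BA_sub[OF blkI] unfolding BAo_def Fin_def by blast
    have "(\<Sum>a\<in>Fin n. pa n a \<omega> * H a (WW n \<omega>)) = (\<Sum>a\<in>Fin n. indicator (BAo n \<omega>) a * H a (WW n \<omega>)) / card (BAo n \<omega>)"
      by (simp add: pa_eq sum_divide_distrib)
    also have "(\<Sum>a\<in>Fin n. indicator (BAo n \<omega>) a * H a (WW n \<omega>)) = (\<Sum>a\<in>BAo n \<omega>. H a (WW n \<omega>))"
    proof -
      have "(\<Sum>a\<in>Fin n. indicator (BAo n \<omega>) a * H a (WW n \<omega>)) = (\<Sum>a\<in>Fin n \<inter> {a. a \<in> BAo n \<omega>}. H a (WW n \<omega>))"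
        by (simp only: indicator_def sum_of_bool_mult_eq[OF Fin_fin])
      also have "Fin n \<inter> {a. a \<in> BAo n \<omega>} = BAo n \<omega>" using sub by blast
      finally show ?thesis .
    qed
    also have "(\<Sum>a\<in>BAo n \<omega>. H a (WW n \<omega>)) \<le> real (card (BAo n \<omega>)) * (real n * (real K * c)^2)"
    proof -
      have "(\<Sum>a\<in>BAo n \<omega>. H a (WW n \<omega>)) = (\<Sum>a\<in>BAo n \<omega>. (\<Sum>i<K*n. \<psi> (unit_rv K Y X i \<omega>) * (of_bool (a i = d) - 1/real K))^2)"
        by (simp add: H_def WW_def)
      also have "\<dots> \<le> real (card (BAo n \<omega>)) * (real n * (real K * c)^2)"
        unfolding BAo_def by (rule blk.avg_bound[OF blkI K1 d psib])
      finally show ?thesis .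
    qed
    then have "(\<Sum>a\<in>BAo n \<omega>. H a (WW n \<omega>)) / card (BAo n \<omega>) \<le> real n * (real K * c)^2"
      using BA_fin' BA_ne' by (simp add: divide_le_eq mult.commute)
    finally show "(\<Sum>a\<in>Fin n. pa n a \<omega> * H a (WW n \<omega>)) \<le> real n * (real K * c)^2" .
  qed
  also have "\<dots> = real n * (real K * c)^2" by (simp add: prob_space)
  finally show ?thesis .
qed

lemma ident_int:
  fixes g :: "(nat \<Rightarrow> real) \<times> 'x \<Rightarrow> real"
  assumes "g \<in> borel_measurable (unit_space K)"
  shows "(\<integral>\<omega>. g (unit_rv K Y X i \<omega>) \<partial>M) = (\<integral>\<omega>. g (unit_rv K Y X 0 \<omega>) \<partial>M)"
    and "integrable M (\<lambda>\<omega>. g (unit_rv K Y X i \<omega>)) = integrable M (\<lambda>\<omega>. g (unit_rv K Y X 0 \<omega>))"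
proof -
  have e: "distr M (unit_space K) (unit_rv K Y X i) = distr M (unit_space K) (unit_rv K Y X 0)"
    using ident by blast
  show "(\<integral>\<omega>. g (unit_rv K Y X i \<omega>) \<partial>M) = (\<integral>\<omega>. g (unit_rv K Y X 0 \<omega>) \<partial>M)"
    using integral_distr[OF W_meas[of i] assms] integral_distr[OF W_meas[of 0] assms] e by simp
  show "integrable M (\<lambda>\<omega>. g (unit_rv K Y X i \<omega>)) = integrable M (\<lambda>\<omega>. g (unit_rv K Y X 0 \<omega>))"
    using integrable_distr_eq[OF W_meas[of i] assms] integrable_distr_eq[OF W_meas[of 0] assms] e by simp
qed

lemma EB:
  assumes psim: "\<psi> \<in> borel_measurable (unit_space K)" and psib: "\<And>w. \<bar>\<psi> w\<bar> \<le> c"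
  defines "m \<equiv> (\<integral>\<omega>. \<psi> (unit_rv K Y X 0 \<omega>) \<partial>M)"
  shows "(\<integral>\<omega>. (\<Sum>i<N. \<psi> (unit_rv K Y X i \<omega>) - m)^2 \<partial>M) \<le> real N * (2*c)^2"
proof -
  define h where "h i \<omega> = \<psi> (unit_rv K Y X i \<omega>) - m" for i \<omega>
  have c0: "c \<ge> 0" using psib[of undefined] by (rule order_trans[OF abs_ge_zero])
  have hm: "h i \<in> borel_measurable M" for i unfolding h_def using W_meas[of i] psim by measurable
  have mb: "\<bar>m\<bar> \<le> c"
  proof -
    have "\<bar>m\<bar> \<le> (\<integral>\<omega>. \<bar>\<psi> (unit_rv K Y X 0 \<omega>)\<bar> \<partial>M)" unfolding m_def by (rule integral_abs_bound)
    also have "\<dots> \<le> (\<integral>\<omega>. c \<partial>M)"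
    proof (rule integral_mono)
      show "integrable M (\<lambda>\<omega>. \<bar>\<psi> (unit_rv K Y X 0 \<omega>)\<bar>)"
        by (rule integrable_const_bound[where B=c]) (use psib W_meas[of 0] psim in auto)
    qed (use psib in auto)
    finally show ?thesis by (simp add: prob_space)
  qed
  have hb: "\<bar>h i \<omega>\<bar> \<le> 2*c" for i \<omega> using psib[of "unit_rv K Y X i \<omega>"] mb by (simp add: h_def)
  have hint: "integrable M (h i)" for i
    by (rule integrable_const_bound[where B="2*c"]) (use hb hm in auto)
  have hb2: "\<bar>h i \<omega> * h k \<omega>\<bar> \<le> (2*c)*(2*c)" for i k \<omega>
    using mult_mono[OF hb[of i \<omega>] hb[of k \<omega>]] c0 by (simp add: abs_mult)
  have hint2: "integrable M (\<lambda>\<omega>. h i \<omega> * h k \<omega>)" for i k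
    by (rule integrable_const_bound[where B="(2*c)*(2*c)"]) (use hb2 hm in auto)
  have h0: "(\<integral>\<omega>. h i \<omega> \<partial>M) = 0" for i
  proof -
    have "(\<integral>\<omega>. h i \<omega> \<partial>M) = (\<integral>\<omega>. \<psi> (unit_rv K Y X i \<omega>) \<partial>M) - m"
    proof -
      have "integrable M (\<lambda>\<omega>. \<psi> (unit_rv K Y X i \<omega>))"
        by (rule integrable_const_bound[where B=c]) (use psib W_meas[of i] psim in auto)
      then show ?thesis by (simp add: prob_space h_def)
    qed
    also have "\<dots> = 0" using ident_int(1)[OF psim, of i] by (simp add: m_def)
    finally show ?thesis .
  qed
  have ind: "indep_vars (\<lambda>_. borel) h UNIV"
  proof -
    have "indep_vars (\<lambda>_. borel) (\<lambda>i \<omega>. (\<lambda>w. \<psi> w - m) (unit_rv K Y X i \<omega>)) UNIV"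
      by (rule indep_vars_compose2[OF indep]) (use psim in measurable)
    then show ?thesis by (simp add: h_def[abs_def])
  qed
  have cross: "(\<integral>\<omega>. h i \<omega> * h k \<omega> \<partial>M) = 0" if "i \<noteq> k" for i k
  proof -
    have "indep_var borel (h i) borel (\<lambda>\<omega>. \<Sum>k\<in>{k}. h k \<omega>)"
      by (rule indep_vars_sum) (use that indep_vars_subset[OF ind] in auto)
    then have "indep_var borel (h i) borel (h k)" by simp
    from indep_var_lebesgue_integral[OF this hint hint] show ?thesis by (simp add: h0)
  qed
  have "(\<integral>\<omega>. (\<Sum>i<N. \<psi> (unit_rv K Y X i \<omega>) - m)^2 \<partial>M) = (\<integral>\<omega>. (\<Sum>i<N. \<Sum>k<N. h i \<omega> * h k \<omega>) \<partial>M)"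
    by (simp add: h_def power2_eq_square sum_product)
  also have "\<dots> = (\<Sum>i<N. \<Sum>k<N. \<integral>\<omega>. h i \<omega> * h k \<omega> \<partial>M)"
    using hint2 by simp
  also have "\<dots> = (\<Sum>i<N. \<integral>\<omega>. h i \<omega> * h i \<omega> \<partial>M)"
  proof (rule sum.cong[OF refl])
    fix i assume i: "i \<in> {..<N}"
    have "(\<Sum>k<N. \<integral>\<omega>. h i \<omega> * h k \<omega> \<partial>M) = (\<Sum>k<N. if k = i then \<integral>\<omega>. h i \<omega> * h i \<omega> \<partial>M else 0)"
      by (rule sum.cong) (auto simp: cross)
    also have "\<dots> = (\<integral>\<omega>. h i \<omega> * h i \<omega> \<partial>M)" using i by simp
    finally show "(\<Sum>k<N. \<integral>\<omega>. h i \<omega> * h k \<omega> \<partial>M) = (\<integral>\<omega>. h i \<omega> * h i \<omega> \<partial>M)" .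
  qed
  also have "\<dots> \<le> (\<Sum>i<N. (2*c)^2)"
  proof (rule sum_mono)
    fix i
    have "(\<integral>\<omega>. h i \<omega> * h i \<omega> \<partial>M) \<le> (\<integral>\<omega>. (2*c)^2 \<partial>M)"
    proof (rule integral_mono[OF hint2])
      show "integrable M (\<lambda>\<omega>. (2*c)^2)" by simp
      fix \<omega>
      have "\<bar>h i \<omega>\<bar>^2 \<le> (2*c)^2" by (rule power_mono[OF hb]) simp
      then show "h i \<omega> * h i \<omega> \<le> (2*c)^2" by (simp add: power2_eq_square)
    qed
    then show "(\<integral>\<omega>. h i \<omega> * h i \<omega> \<partial>M) \<le> (2*c)^2" by (simp add: prob_space)
  qed
  also have "\<dots> = real N * (2*c)^2" by simp
  finally show ?thesis .
qed

end



definition trc :: "real \<Rightarrow> real \<Rightarrow> real" where "trc c x = max (-c) (min c x)"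

lemma trc_bound: "c \<ge> 0 \<Longrightarrow> \<bar>trc c x\<bar> \<le> c" by (auto simp: trc_def)
lemma trc_diff: "c \<ge> 0 \<Longrightarrow> \<bar>x - trc c x\<bar> \<le> \<bar>x\<bar>" by (auto simp: trc_def)
lemma trc_id: "\<bar>x\<bar> \<le> c \<Longrightarrow> trc c x = x" by (auto simp: trc_def)
lemma trc_meas[measurable]: "trc c \<in> borel_measurable borel" unfolding trc_def by measurable

lemma sum_abs_bound: "(\<And>i. i \<in> A \<Longrightarrow> \<bar>u i\<bar> \<le> (b::real)) \<Longrightarrow> \<bar>\<Sum>i\<in>A. u i\<bar> \<le> real (card A) * b"
proof -
  assume h: "\<And>i. i \<in> A \<Longrightarrow> \<bar>u i\<bar> \<le> b"
  have "\<bar>\<Sum>i\<in>A. u i\<bar> \<le> (\<Sum>i\<in>A. \<bar>u i\<bar>)" by (rule sum_abs)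
  also have "\<dots> \<le> (\<Sum>i\<in>A. b)" by (rule sum_mono) (rule h)
  finally show ?thesis by simp
qed

context lc1 begin

lemma Dm[measurable]: "D n i \<in> M \<rightarrow>\<^sub>M count_space UNIV" using D_meas by blast

lemma Ind_meas[measurable]: "(\<lambda>\<omega>. of_bool (D n i \<omega> = d) :: real) \<in> borel_measurable M"
  by measurable


lemma Vbound:
  assumes phim: "\<phi> \<in> borel_measurable (unit_space K)" and d: "d \<in> {1..K}" and c0: "c \<ge> 0" and n1: "n \<ge> 1"
  shows "(\<integral>\<omega>. ((1/real n) * (\<Sum>i<K*n. trc c (\<phi> (unit_rv K Y X i \<omega>)) * of_bool (D n i \<omega> = d))
              - (\<integral>\<omega>. trc c (\<phi> (unit_rv K Y X 0 \<omega>)) \<partial>M))^2 \<partial>M)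
         \<le> 2 * ((real K * c)^2 + (2*c)^2) / real n"
proof -
  define \<psi> where "\<psi> w = trc c (\<phi> w)" for w
  have psim: "\<psi> \<in> borel_measurable (unit_space K)" unfolding \<psi>_def using phim by measurable
  have psib: "\<bar>\<psi> w\<bar> \<le> c" for w unfolding \<psi>_def by (rule trc_bound[OF c0])
  define mg where "mg = (\<integral>\<omega>. \<psi> (unit_rv K Y X 0 \<omega>) \<partial>M)"
  define SA where "SA \<omega> = (\<Sum>i<K*n. \<psi> (unit_rv K Y X i \<omega>) * (of_bool (D n i \<omega> = d) - 1/real K))" for \<omega>
  define SB where "SB \<omega> = (\<Sum>i<K*n. \<psi> (unit_rv K Y X i \<omega>) - mg)" for \<omega>
  have Wm: "\<And>i. unit_rv K Y X i \<in> M \<rightarrow>\<^sub>M unit_space K" by (rule W_meas)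
  have SAm: "SA \<in> borel_measurable M" unfolding SA_def using psim Wm by measurable
  have SBm: "SB \<in> borel_measurable M" unfolding SB_def using psim Wm by measurable
  have Kp: "real K > 0" using K1 by simp
  have np: "real n > 0" using n1 by simp
  have SAt: "\<bar>\<psi> (unit_rv K Y X i \<omega>) * (of_bool (D n i \<omega> = d) - 1/real K)\<bar> \<le> c" for i \<omega>
  proof -
    have e1: "\<bar>of_bool (D n i \<omega> = d) - 1/real K\<bar> \<le> (1::real)" using K1 by auto
    show ?thesis using mult_mono[OF psib e1] c0 by (simp add: abs_mult)
  qed
  have SAb: "\<bar>SA \<omega>\<bar> \<le> real (K*n) * c" for \<omega>
    unfolding SA_def using sum_abs_bound[of "{..<K*n}", OF SAt] by simp
  have SBt: "\<bar>\<psi> (unit_rv K Y X i \<omega>) - mg\<bar> \<le> c + \<bar>mg\<bar>" for i \<omega>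
    using psib[of "unit_rv K Y X i \<omega>"] by linarith
  have SBb: "\<bar>SB \<omega>\<bar> \<le> real (K*n) * (c + \<bar>mg\<bar>)" for \<omega>
    unfolding SB_def using sum_abs_bound[of "{..<K*n}", OF SBt] by simp
  have SA2i: "integrable M (\<lambda>\<omega>. (SA \<omega>)^2)"
  proof (rule integrable_const_bound[where B="(real (K*n) * c)^2"])
    show "AE x in M. norm ((SA x)^2) \<le> (real (K*n) * c)^2"
    proof (rule AE_I2)
      fix x
      have "\<bar>SA x\<bar>^2 \<le> (real (K*n) * c)^2" by (rule power_mono[OF SAb abs_ge_zero])
      then show "norm ((SA x)^2) \<le> (real (K*n) * c)^2" by simp
    qed
  qed (use SAm in measurable)
  have SB2i: "integrable M (\<lambda>\<omega>. (SB \<omega>)^2)"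
  proof (rule integrable_const_bound[where B="(real (K*n) * (c + \<bar>mg\<bar>))^2"])
    show "AE x in M. norm ((SB x)^2) \<le> (real (K*n) * (c + \<bar>mg\<bar>))^2"
    proof (rule AE_I2)
      fix x
      have "\<bar>SB x\<bar>^2 \<le> (real (K*n) * (c + \<bar>mg\<bar>))^2" by (rule power_mono[OF SBb abs_ge_zero])
      then show "norm ((SB x)^2) \<le> (real (K*n) * (c + \<bar>mg\<bar>))^2" by simp
    qed
  qed (use SBm in measurable)
  have EA': "(\<integral>\<omega>. (SA \<omega>)^2 \<partial>M) \<le> real n * (real K * c)^2"
    unfolding SA_def by (rule EA[OF psim psib d])
  have EB': "(\<integral>\<omega>. (SB \<omega>)^2 \<partial>M) \<le> real (K*n) * (2*c)^2"
    unfolding SB_def mg_def by (rule EB[OF psim psib])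
  have Vid: "(1/real n) * (\<Sum>i<K*n. \<psi> (unit_rv K Y X i \<omega>) * of_bool (D n i \<omega> = d)) - mg
      = SA \<omega> / real n + SB \<omega> / (real n * real K)" for \<omega>
  proof -
    have a: "SA \<omega> = (\<Sum>i<K*n. \<psi> (unit_rv K Y X i \<omega>) * of_bool (D n i \<omega> = d)) - (\<Sum>i<K*n. \<psi> (unit_rv K Y X i \<omega>)) / real K"
      unfolding SA_def right_diff_distrib sum_subtractf sum_divide_distrib by simp
    have b: "SB \<omega> = (\<Sum>i<K*n. \<psi> (unit_rv K Y X i \<omega>)) - real K * real n * mg"
      unfolding SB_def sum_subtractf by simp
    show ?thesis unfolding a b using Kp np by (simp add: field_simps)
  qed
  have "(\<integral>\<omega>. ((1/real n) * (\<Sum>i<K*n. trc c (\<phi> (unit_rv K Y X i \<omega>)) * of_bool (D n i \<omega> = d))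
              - (\<integral>\<omega>. trc c (\<phi> (unit_rv K Y X 0 \<omega>)) \<partial>M))^2 \<partial>M)
      = (\<integral>\<omega>. (SA \<omega> / real n + SB \<omega> / (real n * real K))^2 \<partial>M)"
    using Vid by (simp add: \<psi>_def mg_def)
  also have "\<dots> \<le> (\<integral>\<omega>. (2 / (real n)^2) * (SA \<omega>)^2 + (2 / (real n * real K)^2) * (SB \<omega>)^2 \<partial>M)"
  proof (rule integral_mono)
    show "integrable M (\<lambda>\<omega>. (2 / (real n)^2) * (SA \<omega>)^2 + (2 / (real n * real K)^2) * (SB \<omega>)^2)"
      using SA2i SB2i by auto
    show "integrable M (\<lambda>\<omega>. (SA \<omega> / real n + SB \<omega> / (real n * real K))^2)"
    proof -
      have "(\<lambda>\<omega>. (SA \<omega> / real n + SB \<omega> / (real n * real K))^2)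
          = (\<lambda>\<omega>. (1 / (real n)^2) * (SA \<omega>)^2 + (1 / (real n * real K)^2) * (SB \<omega>)^2
                   + (2 / (real n * (real n * real K))) * (SA \<omega> * SB \<omega>))"
        using Kp np by (intro ext) (simp add: power2_eq_square field_simps)
      moreover have "integrable M (\<lambda>\<omega>. SA \<omega> * SB \<omega>)"
      proof (rule integrable_const_bound[where B="(real (K*n) * c) * (real (K*n) * (c + \<bar>mg\<bar>))"])
        show "AE x in M. norm (SA x * SB x) \<le> (real (K*n) * c) * (real (K*n) * (c + \<bar>mg\<bar>))"
        proof (rule AE_I2)
          fix x
          have "0 \<le> real (K*n) * c" using c0 by simp
          then show "norm (SA x * SB x) \<le> (real (K*n) * c) * (real (K*n) * (c + \<bar>mg\<bar>))"
            using mult_mono[OF SAb SBb] by (simp add: abs_mult)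
        qed
      qed (use SAm SBm in measurable)
      ultimately show ?thesis using SA2i SB2i by auto
    qed
    fix \<omega>
    have sq2: "(x+y)^2 \<le> 2*x^2 + 2*y^2" for x y :: real
    proof -
      have "2*x^2 + 2*y^2 - (x+y)^2 = (x-y)^2" by (simp add: power2_eq_square algebra_simps)
      then show ?thesis by (metis diff_ge_0_iff_ge zero_le_power2)
    qed
    have "(2 / (real n)^2) * (SA \<omega>)^2 + (2 / (real n * real K)^2) * (SB \<omega>)^2
        = 2 * (SA \<omega> / real n)^2 + 2 * (SB \<omega> / (real n * real K))^2"
      by (simp add: power_divide)
    then show "(SA \<omega> / real n + SB \<omega> / (real n * real K))^2
        \<le> (2 / (real n)^2) * (SA \<omega>)^2 + (2 / (real n * real K)^2) * (SB \<omega>)^2"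
      using sq2 by simp
  qed
  also have "\<dots> = (2 / (real n)^2) * (\<integral>\<omega>. (SA \<omega>)^2 \<partial>M) + (2 / (real n * real K)^2) * (\<integral>\<omega>. (SB \<omega>)^2 \<partial>M)"
    using SA2i SB2i by simp
  also have "\<dots> \<le> (2 / (real n)^2) * (real n * (real K * c)^2) + (2 / (real n * real K)^2) * (real (K*n) * (2*c)^2)"
    by (intro add_mono mult_left_mono EA' EB') auto
  also have "\<dots> = 2 * (real K * c)^2 / real n + 2 * (2*c)^2 / (real n * real K)"
    using Kp np by (simp add: power2_eq_square field_simps)
  also have "\<dots> \<le> 2 * (real K * c)^2 / real n + 2 * (2*c)^2 / real n"
  proof -
    have "real n * 1 \<le> real n * real K" using K1 np by (intro mult_left_mono) auto
    then have "2 * (2*c)^2 / (real n * real K) \<le> 2 * (2*c)^2 / real n"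
      using Kp np by (intro divide_left_mono) auto
    then show ?thesis by simp
  qed
  also have "\<dots> = 2 * ((real K * c)^2 + (2*c)^2) / real n" by (simp add: add_divide_distrib distrib_left)
  finally show ?thesis .
qed


lemma Pbound:
  assumes phim: "\<phi> \<in> borel_measurable (unit_space K)" and phii: "integrable M (\<lambda>\<omega>. \<phi> (unit_rv K Y X 0 \<omega>))"
    and d: "d \<in> {1..K}" and c0: "c \<ge> 0" and n1: "n \<ge> 1" and eps: "\<epsilon> > 0"
    and dlc: "(\<integral>\<omega>. \<bar>\<phi> (unit_rv K Y X 0 \<omega>) - trc c (\<phi> (unit_rv K Y X 0 \<omega>))\<bar> \<partial>M) \<le> \<epsilon>/4"
  shows "measure M {\<omega>\<in>space M. \<bar>(1/real n) * (\<Sum>i<K*n. \<phi> (unit_rv K Y X i \<omega>) * of_bool (D n i \<omega> = d))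
                       - (\<integral>\<omega>. \<phi> (unit_rv K Y X 0 \<omega>) \<partial>M)\<bar> > \<epsilon>}
    \<le> real K * (\<integral>\<omega>. \<bar>\<phi> (unit_rv K Y X 0 \<omega>) - trc c (\<phi> (unit_rv K Y X 0 \<omega>))\<bar> \<partial>M) / (\<epsilon>/4)
       + (2 * ((real K * c)^2 + (2*c)^2) / real n) / (\<epsilon>/2)^2"
proof -
  define f where "f i \<omega> = \<phi> (unit_rv K Y X i \<omega>)" for i \<omega>
  define g where "g i \<omega> = trc c (f i \<omega>)" for i \<omega>
  define I where "I i \<omega> = (of_bool (D n i \<omega> = d) :: real)" for i \<omega>
  define dl where "dl = (\<integral>\<omega>. \<bar>f 0 \<omega> - g 0 \<omega>\<bar> \<partial>M)"
  define Ef where "Ef = (\<integral>\<omega>. f 0 \<omega> \<partial>M)"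
  define mg where "mg = (\<integral>\<omega>. g 0 \<omega> \<partial>M)"
  define R where "R \<omega> = (1/real n) * (\<Sum>i<K*n. \<bar>f i \<omega> - g i \<omega>\<bar>)" for \<omega>
  define V where "V \<omega> = (1/real n) * (\<Sum>i<K*n. g i \<omega> * I i \<omega>) - mg" for \<omega>
  have Wm: "\<And>i. unit_rv K Y X i \<in> M \<rightarrow>\<^sub>M unit_space K" by (rule W_meas)
  have fm[measurable]: "f i \<in> borel_measurable M" for i unfolding f_def using phim Wm by measurable
  have gm[measurable]: "g i \<in> borel_measurable M" for i unfolding g_def by measurable
  have Im[measurable]: "I i \<in> borel_measurable M" for i unfolding I_def by measurable
  have I01: "0 \<le> I i \<omega>" "I i \<omega> \<le> 1" for i \<omega> by (auto simp: I_def)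
  have gb: "\<bar>g i \<omega>\<bar> \<le> c" for i \<omega> unfolding g_def by (rule trc_bound[OF c0])
  have np: "real n > 0" using n1 by simp
  have Kp: "real K > 0" using K1 by simp
  have fi: "integrable M (f i)" for i
    using ident_int(2)[OF phim, of i] phii by (simp add: f_def[abs_def])
  have gi: "integrable M (g i)" for i
    by (rule integrable_const_bound[where B=c]) (use gb in auto)
  have di: "integrable M (\<lambda>\<omega>. \<bar>f i \<omega> - g i \<omega>\<bar>)" for i
    using fi gi by auto
  have dl_i: "(\<integral>\<omega>. \<bar>f i \<omega> - g i \<omega>\<bar> \<partial>M) = dl" for i
  proof -
    have m: "(\<lambda>w. \<bar>\<phi> w - trc c (\<phi> w)\<bar>) \<in> borel_measurable (unit_space K)" using phim by measurable
    show ?thesis using ident_int(1)[OF m, of i] by (simp add: dl_def f_def g_def)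
  qed
  have Rm[measurable]: "R \<in> borel_measurable M" unfolding R_def by measurable
  have Vm[measurable]: "V \<in> borel_measurable M" unfolding V_def by measurable
  have Ri: "integrable M R" unfolding R_def using di by auto
  have ER: "(\<integral>\<omega>. R \<omega> \<partial>M) = real K * dl"
  proof -
    have "(\<integral>\<omega>. R \<omega> \<partial>M) = (1/real n) * (\<Sum>i<K*n. \<integral>\<omega>. \<bar>f i \<omega> - g i \<omega>\<bar> \<partial>M)"
      unfolding R_def using di by simp
    also have "\<dots> = real K * dl" using np by (simp add: dl_i)
    finally show ?thesis .
  qed
  have Vb: "\<bar>V \<omega>\<bar> \<le> real K * c + \<bar>mg\<bar>" for \<omega>
  proof -
    have t: "\<bar>g i \<omega> * I i \<omega>\<bar> \<le> c" for i
      using mult_mono[OF gb[of i \<omega>], of "\<bar>I i \<omega>\<bar>" 1] I01[of i \<omega>] c0 by (simp add: abs_mult)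
    have "\<bar>\<Sum>i<K*n. g i \<omega> * I i \<omega>\<bar> \<le> real (K*n) * c"
      using sum_abs_bound[of "{..<K*n}", OF t] by simp
    then have "\<bar>(1/real n) * (\<Sum>i<K*n. g i \<omega> * I i \<omega>)\<bar> \<le> real K * c"
      using np by (simp add: abs_mult divide_le_eq mult.commute mult.left_commute)
    then show ?thesis unfolding V_def by linarith
  qed
  have V2i: "integrable M (\<lambda>\<omega>. (V \<omega>)^2)"
  proof (rule integrable_const_bound[where B="(real K * c + \<bar>mg\<bar>)^2"])
    show "AE x in M. norm ((V x)^2) \<le> (real K * c + \<bar>mg\<bar>)^2"
    proof (rule AE_I2)
      fix x
      have "\<bar>V x\<bar>^2 \<le> (real K * c + \<bar>mg\<bar>)^2" by (rule power_mono[OF Vb abs_ge_zero])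
      then show "norm ((V x)^2) \<le> (real K * c + \<bar>mg\<bar>)^2" by simp
    qed
  qed simp
  have EV: "(\<integral>\<omega>. (V \<omega>)^2 \<partial>M) \<le> 2 * ((real K * c)^2 + (2*c)^2) / real n"
    using Vbound[OF phim d c0 n1] by (simp add: V_def mg_def g_def f_def I_def)
  have PR: "measure M {\<omega>\<in>space M. R \<omega> \<ge> \<epsilon>/4} \<le> (\<integral>\<omega>. R \<omega> \<partial>M) / (\<epsilon>/4)"
    by (rule integral_Markov_inequality_measure[OF Ri, where A="space M"])
       (use eps in \<open>auto simp: R_def intro!: sum_nonneg\<close>)
  have PV: "measure M {\<omega>\<in>space M. (V \<omega>)^2 \<ge> (\<epsilon>/2)^2} \<le> (\<integral>\<omega>. (V \<omega>)^2 \<partial>M) / (\<epsilon>/2)^2"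
    by (rule integral_Markov_inequality_measure[OF V2i, where A="space M"]) (use eps in auto)
  have mgEf: "\<bar>mg - Ef\<bar> \<le> dl"
  proof -
    have "mg - Ef = (\<integral>\<omega>. g 0 \<omega> - f 0 \<omega> \<partial>M)" unfolding mg_def Ef_def using fi gi by simp
    also have "\<bar>\<dots>\<bar> \<le> (\<integral>\<omega>. \<bar>g 0 \<omega> - f 0 \<omega>\<bar> \<partial>M)" by (rule integral_abs_bound)
    also have "\<dots> = dl" unfolding dl_def by (simp add: abs_minus_commute)
    finally show ?thesis .
  qed
  have dl4: "dl \<le> \<epsilon>/4" using dlc by (simp add: dl_def f_def g_def)
  have incl: "{\<omega>\<in>space M. \<bar>(1/real n) * (\<Sum>i<K*n. \<phi> (unit_rv K Y X i \<omega>) * of_bool (D n i \<omega> = d)) - (\<integral>\<omega>. \<phi> (unit_rv K Y X 0 \<omega>) \<partial>M)\<bar> > \<epsilon>}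
      \<subseteq> {\<omega>\<in>space M. R \<omega> \<ge> \<epsilon>/4} \<union> {\<omega>\<in>space M. (V \<omega>)^2 \<ge> (\<epsilon>/2)^2}"
  proof (rule subsetI, rule ccontr)
    fix \<omega>
    assume om: "\<omega> \<in> {\<omega>\<in>space M. \<bar>(1/real n) * (\<Sum>i<K*n. \<phi> (unit_rv K Y X i \<omega>) * of_bool (D n i \<omega> = d)) - (\<integral>\<omega>. \<phi> (unit_rv K Y X 0 \<omega>) \<partial>M)\<bar> > \<epsilon>}"
      and nin: "\<omega> \<notin> {\<omega>\<in>space M. R \<omega> \<ge> \<epsilon>/4} \<union> {\<omega>\<in>space M. (V \<omega>)^2 \<ge> (\<epsilon>/2)^2}"
    have big: "\<bar>(1/real n) * (\<Sum>i<K*n. f i \<omega> * I i \<omega>) - Ef\<bar> > \<epsilon>"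
      using om by (simp add: f_def I_def Ef_def)
    have R4: "R \<omega> < \<epsilon>/4" and V2: "(V \<omega>)^2 < (\<epsilon>/2)^2" using om nin by auto
    have V2': "\<bar>V \<omega>\<bar> < \<epsilon>/2"
    proof (rule power_less_imp_less_base)
      show "\<bar>V \<omega>\<bar>^2 < (\<epsilon>/2)^2" using V2 by simp
    qed (use eps in simp)
    define T where "T = (1/real n) * (\<Sum>i<K*n. (f i \<omega> - g i \<omega>) * I i \<omega>)"
    have Zsplit: "(1/real n) * (\<Sum>i<K*n. f i \<omega> * I i \<omega>) - Ef = T + V \<omega> + (mg - Ef)"
    proof -
      have "(\<Sum>i<K*n. f i \<omega> * I i \<omega>) = (\<Sum>i<K*n. (f i \<omega> - g i \<omega>) * I i \<omega>) + (\<Sum>i<K*n. g i \<omega> * I i \<omega>)"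
        by (simp add: sum.distrib[symmetric] algebra_simps)
      then show ?thesis unfolding T_def V_def by (simp add: algebra_simps)
    qed
    have TR: "\<bar>T\<bar> \<le> R \<omega>"
    proof -
      have "\<bar>\<Sum>i<K*n. (f i \<omega> - g i \<omega>) * I i \<omega>\<bar> \<le> (\<Sum>i<K*n. \<bar>(f i \<omega> - g i \<omega>) * I i \<omega>\<bar>)" by (rule sum_abs)
      also have "\<dots> \<le> (\<Sum>i<K*n. \<bar>f i \<omega> - g i \<omega>\<bar>)"
      proof (rule sum_mono)
        fix i
        show "\<bar>(f i \<omega> - g i \<omega>) * I i \<omega>\<bar> \<le> \<bar>f i \<omega> - g i \<omega>\<bar>"
          using mult_left_mono[OF I01(2)[of i \<omega>] abs_ge_zero[of "f i \<omega> - g i \<omega>"]] I01(1)[of i \<omega>]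
          by (simp add: abs_mult)
      qed
      finally show ?thesis unfolding T_def R_def using np by (simp add: abs_mult divide_le_eq mult.commute)
    qed
    have "\<bar>T + V \<omega> + (mg - Ef)\<bar> < \<epsilon>" using TR R4 V2' mgEf dl4 by linarith
    then show False using big Zsplit by simp
  qed
  have s1: "{\<omega>\<in>space M. R \<omega> \<ge> \<epsilon>/4} \<in> sets M" by measurable
  have s2: "{\<omega>\<in>space M. (V \<omega>)^2 \<ge> (\<epsilon>/2)^2} \<in> sets M" by measurable
  have "measure M {\<omega>\<in>space M. \<bar>(1/real n) * (\<Sum>i<K*n. \<phi> (unit_rv K Y X i \<omega>) * of_bool (D n i \<omega> = d)) - (\<integral>\<omega>. \<phi> (unit_rv K Y X 0 \<omega>) \<partial>M)\<bar> > \<epsilon>}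
      \<le> measure M ({\<omega>\<in>space M. R \<omega> \<ge> \<epsilon>/4} \<union> {\<omega>\<in>space M. (V \<omega>)^2 \<ge> (\<epsilon>/2)^2})"
    by (rule finite_measure_mono[OF incl]) (use s1 s2 in auto)
  also have "\<dots> \<le> measure M {\<omega>\<in>space M. R \<omega> \<ge> \<epsilon>/4} + measure M {\<omega>\<in>space M. (V \<omega>)^2 \<ge> (\<epsilon>/2)^2}"
    by (rule measure_Un_le[OF s1 s2])
  also have "\<dots> \<le> real K * dl / (\<epsilon>/4) + (2 * ((real K * c)^2 + (2*c)^2) / real n) / (\<epsilon>/2)^2"
  proof (rule add_mono)
    show "measure M {\<omega>\<in>space M. R \<omega> \<ge> \<epsilon>/4} \<le> real K * dl / (\<epsilon>/4)" using PR ER by simp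
    show "measure M {\<omega>\<in>space M. (V \<omega>)^2 \<ge> (\<epsilon>/2)^2} \<le> (2 * ((real K * c)^2 + (2*c)^2) / real n) / (\<epsilon>/2)^2"
      using PV EV eps by (smt (verit) divide_right_mono zero_le_power2)
  qed
  finally show ?thesis by (simp add: dl_def f_def g_def)
qed


lemma dl_lim:
  assumes phim: "\<phi> \<in> borel_measurable (unit_space K)" and phii: "integrable M (\<lambda>\<omega>. \<phi> (unit_rv K Y X 0 \<omega>))"
  shows "(\<lambda>m. \<integral>\<omega>. \<bar>\<phi> (unit_rv K Y X 0 \<omega>) - trc (real m) (\<phi> (unit_rv K Y X 0 \<omega>))\<bar> \<partial>M) \<longlonglongrightarrow> 0"
proof -
  define f where "f \<omega> = \<phi> (unit_rv K Y X 0 \<omega>)" for \<omega>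
  have fm[measurable]: "f \<in> borel_measurable M" unfolding f_def using phim W_meas[of 0] by measurable
  have "(\<lambda>m. \<integral>\<omega>. \<bar>f \<omega> - trc (real m) (f \<omega>)\<bar> \<partial>M) \<longlonglongrightarrow> (\<integral>\<omega>. 0 \<partial>M)"
  proof (rule integral_dominated_convergence[where w="\<lambda>\<omega>. \<bar>f \<omega>\<bar>"])
    show "integrable M (\<lambda>\<omega>. \<bar>f \<omega>\<bar>)" using phii by (simp add: f_def)
    show "AE x in M. (\<lambda>m. \<bar>f x - trc (real m) (f x)\<bar>) \<longlonglongrightarrow> 0"
    proof (rule AE_I2)
      fix x
      have "eventually (\<lambda>m. \<bar>f x - trc (real m) (f x)\<bar> = 0) sequentially"
      proof (rule eventually_sequentiallyI[of "nat \<lceil>\<bar>f x\<bar>\<rceil>"])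
        fix m assume "nat \<lceil>\<bar>f x\<bar>\<rceil> \<le> m"
        then have "\<bar>f x\<bar> \<le> real m" by linarith
        then show "\<bar>f x - trc (real m) (f x)\<bar> = 0" by (simp add: trc_id)
      qed
      then show "(\<lambda>m. \<bar>f x - trc (real m) (f x)\<bar>) \<longlonglongrightarrow> 0" by (rule tendsto_eventually)
    qed
    show "AE x in M. norm \<bar>f x - trc (real m) (f x)\<bar> \<le> \<bar>f x\<bar>" for m
      using trc_diff[of "real m"] by simp
  qed measurable
  then show ?thesis by (simp add: f_def)
qed

lemma main:
  assumes phim: "\<phi> \<in> borel_measurable (unit_space K)" and phii: "integrable M (\<lambda>\<omega>. \<phi> (unit_rv K Y X 0 \<omega>))"
    and d: "d \<in> {1..K}"
  shows "conv_in_prob M (\<lambda>n \<omega>. (1 / real n) * (\<Sum>i<K*n. \<phi> (unit_rv K Y X i \<omega>) * of_bool (D n i \<omega> = d)))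
           (\<integral>\<omega>. \<phi> (unit_rv K Y X 0 \<omega>) \<partial>M)"
  unfolding conv_in_prob_def
proof (intro allI impI)
  fix \<epsilon> :: real assume eps: "\<epsilon> > 0"
  define dl where "dl c = (\<integral>\<omega>. \<bar>\<phi> (unit_rv K Y X 0 \<omega>) - trc c (\<phi> (unit_rv K Y X 0 \<omega>))\<bar> \<partial>M)" for c
  define P where "P n = measure M {\<omega>\<in>space M. \<bar>(1/real n) * (\<Sum>i<K*n. \<phi> (unit_rv K Y X i \<omega>) * of_bool (D n i \<omega> = d))
                       - (\<integral>\<omega>. \<phi> (unit_rv K Y X 0 \<omega>) \<partial>M)\<bar> > \<epsilon>}" for n
  have Kp: "real K > 0" using K1 by simp
  show "(\<lambda>n. measure M {\<omega>\<in>space M. \<bar>(1/real n) * (\<Sum>i<K*n. \<phi> (unit_rv K Y X i \<omega>) * of_bool (D n i \<omega> = d))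
                       - (\<integral>\<omega>. \<phi> (unit_rv K Y X 0 \<omega>) \<partial>M)\<bar> > \<epsilon>}) \<longlonglongrightarrow> 0"
    unfolding P_def[symmetric]
  proof (rule LIMSEQ_I)
    fix r :: real assume r: "r > 0"
    define t where "t = min (\<epsilon>/4) (r * \<epsilon> / (8 * real K))"
    have t: "t > 0" unfolding t_def using r eps Kp by simp
    have "eventually (\<lambda>m. dl (real m) < t) sequentially"
      using order_tendstoD(2)[OF dl_lim[OF phim phii] t] by (simp add: dl_def)
    then obtain m where m: "dl (real m) < t" by (auto simp: eventually_sequentially)
    define c where "c = real m"
    have c0: "c \<ge> 0" by (simp add: c_def)
    define Cc where "Cc = 2 * ((real K * c)^2 + (2*c)^2)"
    have Cc0: "Cc \<ge> 0" by (simp add: Cc_def)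
    obtain n0 :: nat where n0: "8 * Cc / (\<epsilon>^2 * r) < real n0" using reals_Archimedean2 by blast
    show "\<exists>no. \<forall>n\<ge>no. norm (P n - 0) < r"
    proof (intro exI allI impI)
      fix n assume nn: "max 1 n0 \<le> n"
      then have n1: "n \<ge> 1" and nn0: "real n0 \<le> real n" by auto
      have np: "real n > 0" using n1 by simp
      have dl4: "dl c \<le> \<epsilon>/4" using m unfolding t_def c_def by simp
      have Pb: "P n \<le> real K * dl c / (\<epsilon>/4) + (Cc / real n) / (\<epsilon>/2)^2"
        unfolding P_def dl_def Cc_def
        by (rule Pbound[OF phim phii d c0 n1 eps]) (use dl4 in \<open>simp add: dl_def\<close>)
      have dlnn: "dl c \<ge> 0" unfolding dl_def by simp
      have a1: "real K * dl c / (\<epsilon>/4) < r/2"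
      proof -
        have "dl c < r * \<epsilon> / (8 * real K)" using m unfolding t_def c_def by simp
        then have "real K * dl c < real K * (r * \<epsilon> / (8 * real K))" by (rule mult_strict_left_mono[OF _ Kp])
        also have "\<dots> = r * \<epsilon> / 8" using Kp by simp
        finally have "real K * dl c < r * \<epsilon> / 8" .
        then show ?thesis using eps by (simp add: field_simps)
      qed
      have a2: "(Cc / real n) / (\<epsilon>/2)^2 < r/2"
      proof -
        have "8 * Cc / (\<epsilon>^2 * r) < real n" using n0 nn0 by linarith
        then have "8 * Cc < real n * (\<epsilon>^2 * r)" using eps r by (simp add: divide_less_eq)
        then show ?thesis using eps r np by (simp add: field_simps power2_eq_square)
      qed
      have "P n \<ge> 0" unfolding P_def by simp
      moreover have "P n < r" using Pb a1 a2 by linarith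
      ultimately show "norm (P n - 0) < r" by simp
    qed
  qed
qed

end

theorem lemmaC1:
  fixes M :: "'a measure" and K :: nat
    and Y :: "nat \<Rightarrow> nat \<Rightarrow> 'a \<Rightarrow> real"
    and X :: "nat \<Rightarrow> 'a \<Rightarrow> 'x::euclidean_space"
    and D :: "nat \<Rightarrow> nat \<Rightarrow> 'a \<Rightarrow> nat"
    and lam :: "nat \<Rightarrow> nat \<Rightarrow> (nat \<Rightarrow> 'x) \<Rightarrow> nat set"
  assumes M: "prob_space M"
    and K: "K \<ge> 1"
    \<comment> \<open>W_i = ((Y_i(d))_d, X_i) i.i.d. with common distribution Q\<close>
    and indep: "prob_space.indep_vars M (\<lambda>_. unit_space K) (unit_rv K Y X) UNIV"
    and ident: "\<forall>i. distr M (unit_space K) (unit_rv K Y X i) = distr M (unit_space K) (unit_rv K Y X 0)"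
    \<comment> \<open>Condition Q\<close>
    and Q_a: "\<forall>d\<in>{1..K}. (\<integral>\<omega>. real_cond_exp M (sigma_of M (X 0)) (\<lambda>\<omega>. (Y 0 d \<omega>)^2) \<omega>
                 - (real_cond_exp M (sigma_of M (X 0)) (Y 0 d) \<omega>)^2 \<partial>M) > 0"
    and Q_b: "\<forall>d\<in>{1..K}. integrable M (\<lambda>\<omega>. (Y 0 d \<omega>)^2)"
    and Q_c: "\<forall>d\<in>{1..K}. \<exists>(g::'x \<Rightarrow> real) (h::'x \<Rightarrow> real) (v::'x \<Rightarrow> real) Cg Ch Cv.
                 Cg-lipschitz_on UNIV g \<and> Ch-lipschitz_on UNIV h \<and> Cv-lipschitz_on UNIV v \<and>
                 (AE \<omega> in M. real_cond_exp M (sigma_of M (X 0)) (Y 0 d) \<omega> = g (X 0 \<omega>)) \<and>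
                 (AE \<omega> in M. real_cond_exp M (sigma_of M (X 0)) (\<lambda>\<omega>. (Y 0 d \<omega>)^2) \<omega> = h (X 0 \<omega>)) \<and>
                 (AE \<omega> in M. v (X 0 \<omega>) = h (X 0 \<omega>) - (g (X 0 \<omega>))^2)"
    \<comment> \<open>blocks lam n j (X^(n)), j < n, partition {0..<K*n} into sets of K elements\<close>
    and blocks: "\<forall>n xs. (\<forall>j<n. lam n j xs \<subseteq> {..<K*n} \<and> card (lam n j xs) = K) \<and>
                  (\<forall>j<n. \<forall>j'<n. j \<noteq> j' \<longrightarrow> lam n j xs \<inter> lam n j' xs = {}) \<and>
                  (\<Union>j<n. lam n j xs) = {..<K*n}"
    and blocks_dep: "\<forall>n j xs xs'. (\<forall>i<K*n. xs i = xs' i) \<longrightarrow> lam n j xs = lam n j xs'"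
    and blocks_meas: "\<forall>n j. (\<lambda>\<omega>. lam n j (\<lambda>i. X i \<omega>)) \<in> M \<rightarrow>\<^sub>M count_space UNIV"
    and D_meas: "\<forall>n i. D n i \<in> M \<rightarrow>\<^sub>M count_space UNIV"
    \<comment> \<open>Condition MT: conditional law of D^(n) given W^(n) is uniform on the assignments that
        are permutations of the treatments within each block (i.e. independent uniform
        permutations across blocks), depending on W^(n) only through X^(n)\<close>
    and MT: "\<forall>n. \<forall>B\<in>sets (PiM {..<K*n} (\<lambda>_. unit_space K)). \<forall>a.
               measure M {\<omega>\<in>space M. restrict (\<lambda>i. unit_rv K Y X i \<omega>) {..<K*n} \<in> B \<and>
                                      restrict (\<lambda>i. D n i \<omega>) {..<K*n} = a}
             = (\<integral>\<omega>. indicator B (restrict (\<lambda>i. unit_rv K Y X i \<omega>) {..<K*n}) *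
                     pmf (pmf_of_set (block_assignments K n (\<lambda>j. lam n j (\<lambda>i. X i \<omega>)))) a \<partial>M)"
    \<comment> \<open>Condition Close\<close>
    and Close: "conv_in_prob M (\<lambda>n \<omega>. (1 / real n) * (\<Sum>j<n.
                  Max {(norm (X i \<omega> - X k \<omega>))^2 | i k.
                        i \<in> lam n j (\<lambda>i. X i \<omega>) \<and> k \<in> lam n j (\<lambda>i. X i \<omega>)})) 0"
  shows "\<forall>r\<in>{1::nat, 2}. \<forall>d\<in>{1..K}.
           conv_in_prob M (\<lambda>n \<omega>. (1 / real n) * (\<Sum>i<K*n. (Y i d \<omega>)^r * of_bool (D n i \<omega> = d)))
                          (\<integral>\<omega>. (Y 0 d \<omega>)^r \<partial>M)"
proof -
  interpret lc1 M K Y X D lam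
    by (intro lc1.intro lc1_axioms.intro M K indep ident blocks blocks_meas D_meas MT)
  show ?thesis
  proof (intro ballI)
    fix r d assume r: "r \<in> {1::nat, 2}" and d: "d \<in> {1..K}"
    define \<phi> where "\<phi> w = (fst w d)^r" for w :: "(nat \<Rightarrow> real) \<times> 'x"
    have phim: "\<phi> \<in> borel_measurable (unit_space K)"
      unfolding \<phi>_def unit_space_def using d by measurable
    have phiW: "\<phi> (unit_rv K Y X i \<omega>) = (Y i d \<omega>)^r" for i \<omega>
      using d by (simp add: \<phi>_def unit_rv_def)
    have Ym: "Y 0 d \<in> borel_measurable M"
    proof -
      have "(\<lambda>w. fst w d) \<in> borel_measurable (unit_space K :: ((nat \<Rightarrow> real) \<times> 'x) measure)"
        unfolding unit_space_def using d by measurable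
      from measurable_comp[OF W_meas[of 0] this] show ?thesis
        using d by (simp add: comp_def unit_rv_def)
    qed
    have Y2: "integrable M (\<lambda>\<omega>. (Y 0 d \<omega>)^2)" using Q_b d by blast
    have phii: "integrable M (\<lambda>\<omega>. \<phi> (unit_rv K Y X 0 \<omega>))"
    proof (cases "r = 1")
      case True
      have "integrable M (Y 0 d)"
      proof (rule Bochner_Integration.integrable_bound[where f="\<lambda>\<omega>. 1 + (Y 0 d \<omega>)^2"])
        show "integrable M (\<lambda>\<omega>. 1 + (Y 0 d \<omega>)^2)" using Y2 by simp
        show "AE x in M. norm (Y 0 d x) \<le> norm (1 + (Y 0 d x)^2)"
        proof (rule AE_I2)
          fix x
          have "\<bar>Y 0 d x\<bar> \<le> 1 + (Y 0 d x)^2"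
          proof (cases "\<bar>Y 0 d x\<bar> \<le> 1")
            case True
            then show ?thesis using zero_le_power2[of "Y 0 d x"] by linarith
          next
            case False
            then have "\<bar>Y 0 d x\<bar> * 1 \<le> \<bar>Y 0 d x\<bar> * \<bar>Y 0 d x\<bar>" by (intro mult_left_mono) auto
            then have "\<bar>Y 0 d x\<bar> \<le> \<bar>Y 0 d x\<bar>^2" by (simp add: power2_eq_square)
            then show ?thesis by simp
          qed
          then show "norm (Y 0 d x) \<le> norm (1 + (Y 0 d x)^2)" by simp
        qed
      qed (rule Ym)
      then show ?thesis using True by (simp add: phiW)
    next
      case False
      then have "r = 2" using r by auto
      then show ?thesis using Y2 by (simp add: phiW)
    qed
    from main[OF phim phii d]
    show "conv_in_prob M (\<lambda>n \<omega>. (1 / real n) * (\<Sum>i<K*n. (Y i d \<omega>)^r * of_bool (D n i \<omega> = d)))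
                          (\<integral>\<omega>. (Y 0 d \<omega>)^r \<partial>M)"
      by (simp add: phiW)
  qed
qed

end
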